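(* Let $G$ be an elementary abelian $2$-group, regarded as a vector space over the field $\mathbb{F}_2$. Let $G\otimes_{\mathrm{sym}}G$ denote the subgroup of $G\otimes G$ generated by $\{v\otimes v\mid v\in G\}$, and let $\pi:G\wedge G\to G\otimes_{\mathrm{sym}}G$ be the group homomorphism characterized by $\pi(u\wedge v)=u\otimes v-v\otimes u$. Let $(G\wedge G)\times_\wedge G$ be the group with underlying set $(G\wedge G)\times G$ and multiplication $(s,g)(t,h)=(s+t+g\wedge h,\;g+h)$. Then the map $$\phi:(G\wedge G)\times_\wedge G\to G\otimes_{\mathrm{sym}}G,\qquad (t,g)\mapsto \pi(t)+g\otimes g$$ is a group isomorphism, and $\phi(0,g)=g\otimes g$ for all $g\in G$.
   Context: $G\otimes G$ and $G\wedge G$ denote the tensor square and exterior square of $G$ (as $\mathbb{F}_2$-vector spaces, equivalently as abelian groups). The homomorphism $\pi$ is well defined with values in $G\otimes_{\mathrm{sym}}G$ since $u\otimes v-v\otimes u=(u+v)\otimes(u+v)-u\otimes u-v\otimes v$ in characteristic $2$. *)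

theory Defs
  imports "HOL-Algebra.Algebra" "HOL-Algebra.Free_Abelian_Groups"
begin

text \<open>G is a (multiplicatively written) HOL-Algebra group. The tensor square of
  abelian groups is the free abelian group on G x G modulo the bilinearity relations.\<close>

definition tensor_rels :: "('a, 'b) monoid_scheme \<Rightarrow> (('a \<times> 'a) \<Rightarrow>\<^sub>0 int) set" where
  "tensor_rels G =
     {Poly_Mapping.single (u \<otimes>\<^bsub>G\<^esub> v, w) 1 - Poly_Mapping.single (u, w) 1 - Poly_Mapping.single (v, w) 1
        | u v w. u \<in> carrier G \<and> v \<in> carrier G \<and> w \<in> carrier G}
   \<union> {Poly_Mapping.single (w, u \<otimes>\<^bsub>G\<^esub> v) 1 - Poly_Mapping.single (w, u) 1 - Poly_Mapping.single (w, v) 1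
        | u v w. u \<in> carrier G \<and> v \<in> carrier G \<and> w \<in> carrier G}"

definition free_sq :: "('a, 'b) monoid_scheme \<Rightarrow> (('a \<times> 'a) \<Rightarrow>\<^sub>0 int) monoid" where
  "free_sq G = free_Abelian_group (carrier G \<times> carrier G)"

definition tensor_sq :: "('a, 'b) monoid_scheme \<Rightarrow> (('a \<times> 'a) \<Rightarrow>\<^sub>0 int) set monoid" where
  "tensor_sq G = free_sq G Mod generate (free_sq G) (tensor_rels G)"

definition tens :: "('a, 'b) monoid_scheme \<Rightarrow> 'a \<Rightarrow> 'a \<Rightarrow> (('a \<times> 'a) \<Rightarrow>\<^sub>0 int) set" where
  "tens G u v = generate (free_sq G) (tensor_rels G) #>\<^bsub>free_sq G\<^esub> Poly_Mapping.single (u, v) 1"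

definition ext_rels :: "('a, 'b) monoid_scheme \<Rightarrow> (('a \<times> 'a) \<Rightarrow>\<^sub>0 int) set" where
  "ext_rels G = tensor_rels G \<union> {Poly_Mapping.single (v, v) 1 | v. v \<in> carrier G}"

definition ext_sq :: "('a, 'b) monoid_scheme \<Rightarrow> (('a \<times> 'a) \<Rightarrow>\<^sub>0 int) set monoid" where
  "ext_sq G = free_sq G Mod generate (free_sq G) (ext_rels G)"

definition wedge :: "('a, 'b) monoid_scheme \<Rightarrow> 'a \<Rightarrow> 'a \<Rightarrow> (('a \<times> 'a) \<Rightarrow>\<^sub>0 int) set" where
  "wedge G u v = generate (free_sq G) (ext_rels G) #>\<^bsub>free_sq G\<^esub> Poly_Mapping.single (u, v) 1"

definition sym_tensor_sq :: "('a, 'b) monoid_scheme \<Rightarrow> (('a \<times> 'a) \<Rightarrow>\<^sub>0 int) set monoid" where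
  "sym_tensor_sq G = subgroup_generated (tensor_sq G) ((\<lambda>v. tens G v v) ` carrier G)"

definition wedge_prod :: "('a, 'b) monoid_scheme \<Rightarrow> ((('a \<times> 'a) \<Rightarrow>\<^sub>0 int) set \<times> 'a) monoid" where
  "wedge_prod G =
     \<lparr>carrier = carrier (ext_sq G) \<times> carrier G,
      monoid.mult = (\<lambda>(s, g) (t, h).
         (s \<otimes>\<^bsub>ext_sq G\<^esub> t \<otimes>\<^bsub>ext_sq G\<^esub> wedge G g h, g \<otimes>\<^bsub>G\<^esub> h)),
      one = (\<one>\<^bsub>ext_sq G\<^esub>, \<one>\<^bsub>G\<^esub>)\<rparr>"

end

theory Submission
  imports Defs
begin


section \<open>Cosets in free abelian groups\<close>

lemma fa_normal:
  assumes "subgroup H (free_Abelian_group S)"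
  shows "H \<lhd> free_Abelian_group S"
  by (rule comm_group.subgroup_imp_normal[OF abelian_free_Abelian_group assms])

lemma fa_coset_mult:
  assumes "subgroup H (free_Abelian_group S)" "Poly_Mapping.keys a \<subseteq> S" "Poly_Mapping.keys b \<subseteq> S"
  shows "(H #>\<^bsub>free_Abelian_group S\<^esub> a) \<otimes>\<^bsub>free_Abelian_group S Mod H\<^esub> (H #>\<^bsub>free_Abelian_group S\<^esub> b)
         = H #>\<^bsub>free_Abelian_group S\<^esub> (a + b)"
  using normal.rcos_sum[OF fa_normal[OF assms(1)], of a b] assms by simp

lemma fa_coset_carrier:
  assumes "Poly_Mapping.keys a \<subseteq> S"
  shows "H #>\<^bsub>free_Abelian_group S\<^esub> a \<in> carrier (free_Abelian_group S Mod H)"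
  using assms by (auto simp: carrier_FactGroup)

lemma fa_coset_inv:
  assumes "subgroup H (free_Abelian_group S)" "Poly_Mapping.keys a \<subseteq> S"
  shows "inv\<^bsub>free_Abelian_group S Mod H\<^esub> (H #>\<^bsub>free_Abelian_group S\<^esub> a)
         = H #>\<^bsub>free_Abelian_group S\<^esub> (- a)"
  using normal.inv_FactGroup[OF fa_normal[OF assms(1)] fa_coset_carrier[OF assms(2)]]
    normal.rcos_inv[OF fa_normal[OF assms(1)], of a] assms by simp

lemma fa_coset_eq:
  assumes "subgroup H (free_Abelian_group S)" "Poly_Mapping.keys a \<subseteq> S" "Poly_Mapping.keys b \<subseteq> S"
  shows "(H #>\<^bsub>free_Abelian_group S\<^esub> a = H #>\<^bsub>free_Abelian_group S\<^esub> b) \<longleftrightarrow> a - b \<in> H"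
proof
  have gr: "group (free_Abelian_group S)" by simp
  assume eq: "H #>\<^bsub>free_Abelian_group S\<^esub> a = H #>\<^bsub>free_Abelian_group S\<^esub> b"
  have "a \<in> H #>\<^bsub>free_Abelian_group S\<^esub> a"
    using group.rcos_self[OF gr _ assms(1)] assms by simp
  then have "a \<in> H #>\<^bsub>free_Abelian_group S\<^esub> b" using eq by simp
  from subgroup.rcos_module_imp[OF assms(1) gr _ this] assms
  show "a - b \<in> H" by simp
next
  have gr: "group (free_Abelian_group S)" by simp
  assume "a - b \<in> H"
  then have "a \<in> H #>\<^bsub>free_Abelian_group S\<^esub> b"
    using subgroup.rcos_module_rev[OF assms(1) gr, of b a] assms by simp
  from group.repr_independence[OF gr this _ assms(1)] assms
  show "H #>\<^bsub>free_Abelian_group S\<^esub> a = H #>\<^bsub>free_Abelian_group S\<^esub> b" by simp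
qed

lemma fa_coset_zero:
  assumes "subgroup H (free_Abelian_group S)"
  shows "H #>\<^bsub>free_Abelian_group S\<^esub> 0 = H"
  using group.coset_mult_one[OF group_free_Abelian_group, of H S] subgroup.subset[OF assms]
  by simp

lemma fa_coset_one_iff:
  assumes "subgroup H (free_Abelian_group S)" "Poly_Mapping.keys a \<subseteq> S"
  shows "(H #>\<^bsub>free_Abelian_group S\<^esub> a = H) \<longleftrightarrow> a \<in> H"
  using fa_coset_eq[OF assms(1,2), of 0] fa_coset_zero[OF assms(1)] by simp

lemma fa_sub_sum:
  assumes "subgroup H (free_Abelian_group S)" "\<And>i. i \<in> I \<Longrightarrow> g i \<in> H"
  shows "sum g I \<in> H"
  using assms(2)
proof (induction I rule: infinite_finite_induct)
  case (infinite A) then show ?case using subgroup.one_closed[OF assms(1)] by simp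
next
  case empty then show ?case using subgroup.one_closed[OF assms(1)] by simp
next
  case (insert x F)
  have a: "g x \<in> H" using insert.prems by blast
  have b: "sum g F \<in> H" using insert.IH insert.prems by blast
  have "g x + sum g F \<in> H" using subgroup.m_closed[OF assms(1) a b] by simp
  then show ?case using insert.hyps by (simp add: sum.insert)
qed

lemma fa_sub_diff:
  assumes "subgroup H (free_Abelian_group S)" "a \<in> H" "b \<in> H"
  shows "a - b \<in> H"
proof -
  have "b \<in> carrier (free_Abelian_group S)" using subgroup.mem_carrier[OF assms(1) assms(3)] .
  then have "Poly_Mapping.keys b \<subseteq> S" by simp
  then have "-b \<in> H" using subgroup.m_inv_closed[OF assms(1) assms(3)] by simp
  then have "a \<otimes>\<^bsub>free_Abelian_group S\<^esub> (-b) \<in> H" using subgroup.m_closed[OF assms(1) assms(2)] by blast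
  then show ?thesis by simp
qed

lemma fa_sub_add:
  assumes "subgroup H (free_Abelian_group S)" "a \<in> H" "b \<in> H"
  shows "a + b \<in> H"
  using subgroup.m_closed[OF assms(1) assms(2,3)] by simp

lemma fa_sub_neg:
  assumes "subgroup H (free_Abelian_group S)" "a \<in> H"
  shows "- a \<in> H"
  using fa_sub_diff[OF assms(1) subgroup.one_closed[OF assms(1)] assms(2)] by simp

lemma fa_sub_cmul:
  assumes "subgroup H (free_Abelian_group S)" "a \<in> H"
  shows "frag_cmul k a \<in> H"
  by (rule frag_closure_minus_cmul[where P="\<lambda>x. x \<in> H"])
     (use subgroup.one_closed[OF assms(1)] fa_sub_diff[OF assms(1)] assms(2) in auto)



locale E2 = comm_group G for G (structure) +
  assumes sq: "x \<in> carrier G \<Longrightarrow> x \<otimes> x = \<one>"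
begin

abbreviation "CC \<equiv> carrier G \<times> carrier G"
abbreviation "FF \<equiv> free_Abelian_group CC"
abbreviation "NN \<equiv> generate FF (tensor_rels G)"
abbreviation "MM \<equiv> generate FF (ext_rels G)"

lemma free_sq_eq: "free_sq G = FF" by (simp add: free_sq_def)
lemma tensor_sq_eq: "tensor_sq G = FF Mod NN" by (simp add: tensor_sq_def free_sq_def)
lemma ext_sq_eq: "ext_sq G = FF Mod MM" by (simp add: ext_sq_def free_sq_def)
lemma tens_eq: "tens G u v = NN #>\<^bsub>FF\<^esub> frag_of (u,v)" by (simp add: tens_def free_sq_def)
lemma wedge_eq: "wedge G u v = MM #>\<^bsub>FF\<^esub> frag_of (u,v)" by (simp add: wedge_def free_sq_def)

lemma keys_frag_of_C [simp]: "u \<in> carrier G \<Longrightarrow> v \<in> carrier G \<Longrightarrow> Poly_Mapping.keys (frag_of (u,v)) \<subseteq> CC"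
  by simp

lemma tensor_rels_sub: "tensor_rels G \<subseteq> carrier FF"
proof
  fix x assume "x \<in> tensor_rels G"
  have k: "Poly_Mapping.keys (frag_of a - frag_of b - frag_of c) \<subseteq> {a,b,c}" for a b c :: "'a\<times>'a"
    using keys_diff[of "frag_of a - frag_of b" "frag_of c"] keys_diff[of "frag_of a" "frag_of b"] by auto
  show "x \<in> carrier FF"
    using \<open>x \<in> tensor_rels G\<close> unfolding tensor_rels_def
    by (auto dest!: subsetD[OF k])
qed

lemma ext_rels_sub: "ext_rels G \<subseteq> carrier FF"
  using tensor_rels_sub unfolding ext_rels_def by auto

lemma NN_sub: "subgroup NN FF"
  by (rule group.generate_is_subgroup[OF group_free_Abelian_group tensor_rels_sub])

lemma MM_sub: "subgroup MM FF"
  by (rule group.generate_is_subgroup[OF group_free_Abelian_group ext_rels_sub])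

lemma NN_MM: "NN \<subseteq> MM"
  by (rule group.mono_generate[OF group_free_Abelian_group]) (auto simp: ext_rels_def)

lemma rel1: "u \<in> carrier G \<Longrightarrow> v \<in> carrier G \<Longrightarrow> w \<in> carrier G \<Longrightarrow>
   frag_of (u \<otimes> v, w) - frag_of (u, w) - frag_of (v, w) \<in> NN"
  by (rule generate.incl) (auto simp: tensor_rels_def)

lemma rel2: "u \<in> carrier G \<Longrightarrow> v \<in> carrier G \<Longrightarrow> w \<in> carrier G \<Longrightarrow>
   frag_of (w, u \<otimes> v) - frag_of (w, u) - frag_of (w, v) \<in> NN"
  by (rule generate.incl) (auto simp: tensor_rels_def)

lemma rel_diag: "v \<in> carrier G \<Longrightarrow> frag_of (v, v) \<in> MM"
  by (rule generate.incl) (auto simp: ext_rels_def)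

lemma n_one1: "v \<in> carrier G \<Longrightarrow> frag_of (\<one>, v) \<in> NN"
  using fa_sub_neg[OF NN_sub rel1[of \<one> \<one> v]] by simp

lemma n_one2: "v \<in> carrier G \<Longrightarrow> frag_of (v, \<one>) \<in> NN"
  using fa_sub_neg[OF NN_sub rel2[of \<one> \<one> v]] by simp

lemma n_two: "u \<in> carrier G \<Longrightarrow> v \<in> carrier G \<Longrightarrow> frag_of (u, v) + frag_of (u, v) \<in> NN"
  using fa_sub_diff[OF NN_sub n_one1[of v] rel1[of u u v]] by (simp add: sq)

lemma m_anti: "u \<in> carrier G \<Longrightarrow> v \<in> carrier G \<Longrightarrow> frag_of (u, v) + frag_of (v, u) \<in> MM"
proof -
  assume u: "u \<in> carrier G" and v: "v \<in> carrier G"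
  define r1 where "r1 = frag_of (u \<otimes> v, u \<otimes> v) - frag_of (u, u \<otimes> v) - frag_of (v, u \<otimes> v)"
  define r2 where "r2 = frag_of (u, u \<otimes> v) - frag_of (u, u) - frag_of (u, v)"
  define r3 where "r3 = frag_of (v, u \<otimes> v) - frag_of (v, u) - frag_of (v, v)"
  have "r1 \<in> MM" "r2 \<in> MM" "r3 \<in> MM"
    using rel1[of u v "u \<otimes> v"] rel2[of u v u] rel2[of u v v] NN_MM u v
    by (auto simp: r1_def r2_def r3_def)
  moreover have "frag_of (u \<otimes> v, u \<otimes> v) \<in> MM" "frag_of (u,u) \<in> MM" "frag_of (v,v) \<in> MM"
    using rel_diag u v by auto
  moreover have "frag_of (u, v) + frag_of (v, u) =
     frag_of (u \<otimes> v, u \<otimes> v) - r1 - r2 - r3 - frag_of (u,u) - frag_of (v,v)"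
    by (simp add: r1_def r2_def r3_def algebra_simps)
  ultimately show ?thesis
    by (metis fa_sub_diff[OF MM_sub])
qed

lemma group_T: "group (FF Mod NN)"
  by (rule normal.factorgroup_is_group[OF fa_normal[OF NN_sub]])

lemma group_E: "group (FF Mod MM)"
  by (rule normal.factorgroup_is_group[OF fa_normal[OF MM_sub]])

lemma comm_Mod:
  assumes "subgroup H FF"
  shows "comm_group (FF Mod H)"
proof (rule group.group_comm_groupI)
  show "group (FF Mod H)" by (rule normal.factorgroup_is_group[OF fa_normal[OF assms]])
  fix x y assume "x \<in> carrier (FF Mod H)" "y \<in> carrier (FF Mod H)"
  then obtain a b where ab: "Poly_Mapping.keys a \<subseteq> CC" "Poly_Mapping.keys b \<subseteq> CC"
    "x = H #>\<^bsub>FF\<^esub> a" "y = H #>\<^bsub>FF\<^esub> b"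
    by (auto simp: carrier_FactGroup)
  show "x \<otimes>\<^bsub>FF Mod H\<^esub> y = y \<otimes>\<^bsub>FF Mod H\<^esub> x"
    using fa_coset_mult[OF assms ab(1,2)] fa_coset_mult[OF assms ab(2,1)] ab(3,4)
    by (simp add: add.commute)
qed

lemma tens_carrier: "u \<in> carrier G \<Longrightarrow> v \<in> carrier G \<Longrightarrow> tens G u v \<in> carrier (tensor_sq G)"
  unfolding tens_eq tensor_sq_eq by (rule fa_coset_carrier) simp

lemma wedge_carrier: "u \<in> carrier G \<Longrightarrow> v \<in> carrier G \<Longrightarrow> wedge G u v \<in> carrier (ext_sq G)"
  unfolding wedge_eq ext_sq_eq by (rule fa_coset_carrier) simp

lemma coset_add_eq:
  assumes H: "subgroup H FF" and k: "Poly_Mapping.keys a \<subseteq> CC" "Poly_Mapping.keys b \<subseteq> CC"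
    "Poly_Mapping.keys c \<subseteq> CC" and r: "c - a - b \<in> H"
  shows "H #>\<^bsub>FF\<^esub> c = (H #>\<^bsub>FF\<^esub> a) \<otimes>\<^bsub>FF Mod H\<^esub> (H #>\<^bsub>FF\<^esub> b)"
proof -
  have kab: "Poly_Mapping.keys (a + b) \<subseteq> CC" using keys_add[of a b] k by blast
  have "H #>\<^bsub>FF\<^esub> c = H #>\<^bsub>FF\<^esub> (a + b)"
    using fa_coset_eq[OF H k(3) kab] r by (simp add: diff_diff_eq)
  also have "\<dots> = (H #>\<^bsub>FF\<^esub> a) \<otimes>\<^bsub>FF Mod H\<^esub> (H #>\<^bsub>FF\<^esub> b)"
    using fa_coset_mult[OF H k(1,2)] by simp
  finally show ?thesis .
qed

lemma tens_mult1:
  assumes "u \<in> carrier G" "v \<in> carrier G" "w \<in> carrier G"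
  shows "tens G (u \<otimes> v) w = tens G u w \<otimes>\<^bsub>tensor_sq G\<^esub> tens G v w"
  unfolding tens_eq tensor_sq_eq
  by (rule coset_add_eq[OF NN_sub]) (use assms rel1[OF assms] in simp_all)

lemma tens_mult2:
  assumes "u \<in> carrier G" "v \<in> carrier G" "w \<in> carrier G"
  shows "tens G w (u \<otimes> v) = tens G w u \<otimes>\<^bsub>tensor_sq G\<^esub> tens G w v"
  unfolding tens_eq tensor_sq_eq
  by (rule coset_add_eq[OF NN_sub]) (use assms rel2[OF assms] in simp_all)

lemma wedge_mult1:
  assumes "u \<in> carrier G" "v \<in> carrier G" "w \<in> carrier G"
  shows "wedge G (u \<otimes> v) w = wedge G u w \<otimes>\<^bsub>ext_sq G\<^esub> wedge G v w"
  unfolding wedge_eq ext_sq_eq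
  by (rule coset_add_eq[OF MM_sub]) (use assms rel1[OF assms] NN_MM in auto)

lemma wedge_mult2:
  assumes "u \<in> carrier G" "v \<in> carrier G" "w \<in> carrier G"
  shows "wedge G w (u \<otimes> v) = wedge G w u \<otimes>\<^bsub>ext_sq G\<^esub> wedge G w v"
  unfolding wedge_eq ext_sq_eq
  by (rule coset_add_eq[OF MM_sub]) (use assms rel2[OF assms] NN_MM in auto)

lemma wedge_self: "v \<in> carrier G \<Longrightarrow> wedge G v v = \<one>\<^bsub>ext_sq G\<^esub>"
  unfolding wedge_eq ext_sq_eq
  using fa_coset_one_iff[OF MM_sub, of "frag_of (v,v)"] rel_diag by simp

lemma coset_add_one:
  assumes H: "subgroup H FF" and k: "Poly_Mapping.keys a \<subseteq> CC" "Poly_Mapping.keys b \<subseteq> CC"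
    and r: "a + b \<in> H"
  shows "(H #>\<^bsub>FF\<^esub> a) \<otimes>\<^bsub>FF Mod H\<^esub> (H #>\<^bsub>FF\<^esub> b) = \<one>\<^bsub>FF Mod H\<^esub>"
proof -
  have kab: "Poly_Mapping.keys (a + b) \<subseteq> CC" using keys_add[of a b] k by blast
  have "(H #>\<^bsub>FF\<^esub> a) \<otimes>\<^bsub>FF Mod H\<^esub> (H #>\<^bsub>FF\<^esub> b) = H #>\<^bsub>FF\<^esub> (a + b)"
    using fa_coset_mult[OF H k(1,2)] by simp
  also have "\<dots> = H" using fa_coset_one_iff[OF H kab] r by simp
  finally show ?thesis by simp
qed

lemma tens_sq:
  assumes "u \<in> carrier G" "v \<in> carrier G"
  shows "tens G u v \<otimes>\<^bsub>tensor_sq G\<^esub> tens G u v = \<one>\<^bsub>tensor_sq G\<^esub>"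
  unfolding tens_eq tensor_sq_eq
  by (rule coset_add_one[OF NN_sub]) (use assms n_two[OF assms] in simp_all)

lemma wedge_sq:
  assumes "u \<in> carrier G" "v \<in> carrier G"
  shows "wedge G u v \<otimes>\<^bsub>ext_sq G\<^esub> wedge G u v = \<one>\<^bsub>ext_sq G\<^esub>"
  unfolding wedge_eq ext_sq_eq
  by (rule coset_add_one[OF MM_sub]) (use assms n_two[OF assms] NN_MM in auto)

lemma wedge_one1: "v \<in> carrier G \<Longrightarrow> wedge G \<one> v = \<one>\<^bsub>ext_sq G\<^esub>"
  unfolding wedge_eq ext_sq_eq
  using fa_coset_one_iff[OF MM_sub, of "frag_of (\<one>,v)"] n_one1 NN_MM by auto

lemma comm_T: "comm_group (tensor_sq G)"
  unfolding tensor_sq_eq by (rule comm_Mod[OF NN_sub])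

lemma comm_E: "comm_group (ext_sq G)"
  unfolding ext_sq_eq by (rule comm_Mod[OF MM_sub])

end


context E2 begin

lemma wp_carrier: "carrier (wedge_prod G) = carrier (ext_sq G) \<times> carrier G"
  by (simp add: wedge_prod_def)

lemma wp_mult: "(s, g) \<otimes>\<^bsub>wedge_prod G\<^esub> (t, h) = (s \<otimes>\<^bsub>ext_sq G\<^esub> t \<otimes>\<^bsub>ext_sq G\<^esub> wedge G g h, g \<otimes> h)"
  by (simp add: wedge_prod_def)

lemma wp_one: "\<one>\<^bsub>wedge_prod G\<^esub> = (\<one>\<^bsub>ext_sq G\<^esub>, \<one>)"
  by (simp add: wedge_prod_def)

lemma wp_group: "group (wedge_prod G)"
proof -
  interpret E: comm_group "ext_sq G" by (rule comm_E)
  show ?thesis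
  proof (rule groupI, simp_all only: wp_carrier wp_one)
    fix x y assume "x \<in> carrier (ext_sq G) \<times> carrier G" "y \<in> carrier (ext_sq G) \<times> carrier G"
    then show "x \<otimes>\<^bsub>wedge_prod G\<^esub> y \<in> carrier (ext_sq G) \<times> carrier G"
      by (cases x, cases y) (simp add: wp_mult wedge_carrier)
  next
    show "(\<one>\<^bsub>ext_sq G\<^esub>, \<one>) \<in> carrier (ext_sq G) \<times> carrier G" by simp
  next
    fix x y z assume xyz: "x \<in> carrier (ext_sq G) \<times> carrier G" "y \<in> carrier (ext_sq G) \<times> carrier G"
      "z \<in> carrier (ext_sq G) \<times> carrier G"
    obtain s g t h r k where e: "x = (s,g)" "y = (t,h)" "z = (r,k)" by (cases x, cases y, cases z)
    from xyz e have c: "s \<in> carrier (ext_sq G)" "t \<in> carrier (ext_sq G)" "r \<in> carrier (ext_sq G)"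
      "g \<in> carrier G" "h \<in> carrier G" "k \<in> carrier G" by auto
    show "x \<otimes>\<^bsub>wedge_prod G\<^esub> y \<otimes>\<^bsub>wedge_prod G\<^esub> z = x \<otimes>\<^bsub>wedge_prod G\<^esub> (y \<otimes>\<^bsub>wedge_prod G\<^esub> z)"
      using c by (simp add: e wp_mult wedge_mult1 wedge_mult2 wedge_carrier m_assoc E.m_ac)
  next
    fix x assume x: "x \<in> carrier (ext_sq G) \<times> carrier G"
    then show "(\<one>\<^bsub>ext_sq G\<^esub>, \<one>) \<otimes>\<^bsub>wedge_prod G\<^esub> x = x"
      by (cases x) (simp add: wp_mult wedge_one1)
  next
    fix x assume x: "x \<in> carrier (ext_sq G) \<times> carrier G"
    obtain s g where e: "x = (s,g)" by (cases x)
    have c: "s \<in> carrier (ext_sq G)" "g \<in> carrier G" using x e by auto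
    show "\<exists>y\<in>carrier (ext_sq G) \<times> carrier G. y \<otimes>\<^bsub>wedge_prod G\<^esub> x = (\<one>\<^bsub>ext_sq G\<^esub>, \<one>)"
      by (rule bexI[of _ "(inv\<^bsub>ext_sq G\<^esub> s, g)"]) (use c in \<open>simp_all add: e wp_mult wedge_self sq\<close>)
  qed
qed

end

locale E2pi = E2 +
  fixes \<pi> :: "(('a \<times> 'a) \<Rightarrow>\<^sub>0 int) set \<Rightarrow> (('a \<times> 'a) \<Rightarrow>\<^sub>0 int) set"
  assumes pi_hom: "\<pi> \<in> hom (ext_sq G) (sym_tensor_sq G)"
    and pi_wedge: "\<And>u v. u \<in> carrier G \<Longrightarrow> v \<in> carrier G \<Longrightarrow>
      \<pi> (wedge G u v) = tens G u v \<otimes>\<^bsub>tensor_sq G\<^esub> inv\<^bsub>tensor_sq G\<^esub> (tens G v u)"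
begin

lemma group_S: "group (sym_tensor_sq G)"
  unfolding sym_tensor_sq_def using comm_T comm_group.axioms(2) group.group_subgroup_generated by blast

lemma S_sub_T: "carrier (sym_tensor_sq G) \<subseteq> carrier (tensor_sq G)"
  unfolding sym_tensor_sq_def
  by (rule group.carrier_subgroup_generated_subset[OF comm_group.axioms(2)[OF comm_T]])

lemma S_mult [simp]: "x \<otimes>\<^bsub>sym_tensor_sq G\<^esub> y = x \<otimes>\<^bsub>tensor_sq G\<^esub> y"
  by (simp add: sym_tensor_sq_def)

lemma S_one [simp]: "\<one>\<^bsub>sym_tensor_sq G\<^esub> = \<one>\<^bsub>tensor_sq G\<^esub>"
  by (simp add: sym_tensor_sq_def)

lemma S_inv: "x \<in> carrier (sym_tensor_sq G) \<Longrightarrow> inv\<^bsub>sym_tensor_sq G\<^esub> x = inv\<^bsub>tensor_sq G\<^esub> x"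
  unfolding sym_tensor_sq_def
  by (rule group.inv_subgroup_generated[OF comm_group.axioms(2)[OF comm_T]])
     (simp add: sym_tensor_sq_def)

lemma tens_diag_S: "g \<in> carrier G \<Longrightarrow> tens G g g \<in> carrier (sym_tensor_sq G)"
  unfolding sym_tensor_sq_def carrier_subgroup_generated
  by (rule generate.incl) (simp add: tens_carrier)

lemma gh_pi: "group_hom (ext_sq G) (sym_tensor_sq G) \<pi>"
  unfolding group_hom_def group_hom_axioms_def
  using comm_group.axioms(2)[OF comm_E] group_S pi_hom by blast

lemma pi_carrier: "t \<in> carrier (ext_sq G) \<Longrightarrow> \<pi> t \<in> carrier (sym_tensor_sq G)"
  using pi_hom by (auto simp: hom_def)

lemma pi_carrier_T: "t \<in> carrier (ext_sq G) \<Longrightarrow> \<pi> t \<in> carrier (tensor_sq G)"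
  using pi_carrier S_sub_T by blast

lemma tens_inv_self: "u \<in> carrier G \<Longrightarrow> v \<in> carrier G \<Longrightarrow> inv\<^bsub>tensor_sq G\<^esub> (tens G u v) = tens G u v"
  using group.inv_equality[OF comm_group.axioms(2)[OF comm_T] tens_sq] tens_carrier by blast

lemma pi_wedge': "u \<in> carrier G \<Longrightarrow> v \<in> carrier G \<Longrightarrow>
      \<pi> (wedge G u v) = tens G u v \<otimes>\<^bsub>tensor_sq G\<^esub> tens G v u"
  by (simp add: pi_wedge tens_inv_self)

definition phi where "phi = (\<lambda>(t, g). \<pi> t \<otimes>\<^bsub>sym_tensor_sq G\<^esub> tens G g g)"

lemma phi_hom: "phi \<in> hom (wedge_prod G) (sym_tensor_sq G)"
proof (rule homI)
  interpret T: comm_group "tensor_sq G" by (rule comm_T)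
  fix x assume x: "x \<in> carrier (wedge_prod G)"
  obtain t g where e: "x = (t,g)" by (cases x)
  have "\<pi> t \<otimes>\<^bsub>sym_tensor_sq G\<^esub> tens G g g \<in> carrier (sym_tensor_sq G)"
    by (rule monoid.m_closed[OF group.is_monoid[OF group_S]])
       (use x e pi_carrier tens_diag_S in \<open>auto simp: wp_carrier\<close>)
  then show "phi x \<in> carrier (sym_tensor_sq G)" by (simp add: phi_def e)
next
  interpret T: comm_group "tensor_sq G" by (rule comm_T)
  fix x y assume x: "x \<in> carrier (wedge_prod G)" and y: "y \<in> carrier (wedge_prod G)"
  obtain s g t h where e: "x = (s,g)" "y = (t,h)" by (cases x, cases y)
  from x y e have c: "s \<in> carrier (ext_sq G)" "t \<in> carrier (ext_sq G)"
      "g \<in> carrier G" "h \<in> carrier G" by (auto simp: wp_carrier)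
  have pm: "\<pi> (s \<otimes>\<^bsub>ext_sq G\<^esub> t \<otimes>\<^bsub>ext_sq G\<^esub> wedge G g h)
      = \<pi> s \<otimes>\<^bsub>tensor_sq G\<^esub> \<pi> t \<otimes>\<^bsub>tensor_sq G\<^esub> (tens G g h \<otimes>\<^bsub>tensor_sq G\<^esub> tens G h g)"
    using c group_hom.hom_mult[OF gh_pi] wedge_carrier comm_group.axioms(2)[OF comm_E]
    by (simp add: pi_wedge' monoid.m_closed group.is_monoid)
  have tt: "tens G (g \<otimes> h) (g \<otimes> h) = tens G g g \<otimes>\<^bsub>tensor_sq G\<^esub> tens G g h \<otimes>\<^bsub>tensor_sq G\<^esub>
       (tens G h g \<otimes>\<^bsub>tensor_sq G\<^esub> tens G h h)"
    using c by (simp add: tens_mult1 tens_mult2 tens_carrier T.m_ac)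
  have "phi (x \<otimes>\<^bsub>wedge_prod G\<^esub> y) =
     (\<pi> s \<otimes>\<^bsub>tensor_sq G\<^esub> tens G g g \<otimes>\<^bsub>tensor_sq G\<^esub> (\<pi> t \<otimes>\<^bsub>tensor_sq G\<^esub> tens G h h))
     \<otimes>\<^bsub>tensor_sq G\<^esub> ((tens G g h \<otimes>\<^bsub>tensor_sq G\<^esub> tens G g h) \<otimes>\<^bsub>tensor_sq G\<^esub>
        (tens G h g \<otimes>\<^bsub>tensor_sq G\<^esub> tens G h g))"
    using c by (simp add: e wp_mult phi_def pm tt pi_carrier_T tens_carrier T.m_ac)
  also have "\<dots> = phi x \<otimes>\<^bsub>sym_tensor_sq G\<^esub> phi y"
    using c by (simp add: e phi_def tens_sq pi_carrier_T tens_carrier)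
  finally show "phi (x \<otimes>\<^bsub>wedge_prod G\<^esub> y) = phi x \<otimes>\<^bsub>sym_tensor_sq G\<^esub> phi y" .
qed

end


context E2 begin

abbreviation fp where "fp S \<equiv> finprod G (\<lambda>x. x) S"

lemma fp_carrier: "S \<subseteq> carrier G \<Longrightarrow> fp S \<in> carrier G"
  by (rule finprod_closed) auto

lemma fp_sq: "S \<subseteq> carrier G \<Longrightarrow> fp S \<otimes> fp S = \<one>"
proof -
  assume S: "S \<subseteq> carrier G"
  have "fp S \<otimes> fp S = finprod G (\<lambda>x. x \<otimes> x) S"
    using S by (subst finprod_multf) auto
  also have "\<dots> = \<one>" by (rule finprod_one_eqI) (use S sq in auto)
  finally show ?thesis .
qed

lemma fp_symdiff:
  assumes "finite S" "finite T" "S \<subseteq> carrier G" "T \<subseteq> carrier G"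
  shows "fp ((S - T) \<union> (T - S)) = fp S \<otimes> fp T"
proof -
  have c: "(\<lambda>x. x) \<in> Z \<rightarrow> carrier G" if "Z \<subseteq> carrier G" for Z using that by auto
  have u1: "(S - T) \<union> (S \<inter> T) = S" by blast
  have u2: "(T - S) \<union> (S \<inter> T) = T" by blast
  have e1: "fp S = fp (S - T) \<otimes> fp (S \<inter> T)"
    using finprod_Un_disjoint[of "S - T" "S \<inter> T" "\<lambda>x. x"] assms unfolding u1 by auto
  have e2: "fp T = fp (T - S) \<otimes> fp (S \<inter> T)"
    using finprod_Un_disjoint[of "T - S" "S \<inter> T" "\<lambda>x. x"] assms unfolding u2 by auto
  have e3: "fp ((S - T) \<union> (T - S)) = fp (S - T) \<otimes> fp (T - S)"
    using finprod_Un_disjoint[of "S - T" "T - S" "\<lambda>x. x"] assms c by blast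
  have cc: "fp (S - T) \<in> carrier G" "fp (T - S) \<in> carrier G" "fp (S \<inter> T) \<in> carrier G"
    using assms by (auto intro!: fp_carrier)
  have "fp S \<otimes> fp T = (fp (S - T) \<otimes> fp (T - S)) \<otimes> (fp (S \<inter> T) \<otimes> fp (S \<inter> T))"
    using cc by (simp add: e1 e2 m_ac)
  also have "\<dots> = fp (S - T) \<otimes> fp (T - S)"
  proof -
    have "fp (S \<inter> T) \<otimes> fp (S \<inter> T) = \<one>" using assms(3) by (intro fp_sq) auto
    then show ?thesis using cc by simp
  qed
  finally show ?thesis using e3 by simp
qed

definition indep where
  "indep I \<longleftrightarrow> I \<subseteq> carrier G \<and> (\<forall>S. finite S \<and> S \<subseteq> I \<and> fp S = \<one> \<longrightarrow> S = {})"

lemma exists_max_indep: "\<exists>B\<in>{I. indep I}. \<forall>Z\<in>{I. indep I}. B \<subseteq> Z \<longrightarrow> Z = B"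
proof (rule subset_Zorn)
  fix C assume ch: "subset.chain {I. indep I} C"
  show "\<exists>U\<in>{I. indep I}. \<forall>Z\<in>C. Z \<subseteq> U"
  proof (intro bexI[of _ "\<Union>C"] ballI)
    show "\<Union>C \<in> {I. indep I}"
      unfolding mem_Collect_eq indep_def
    proof (intro conjI allI impI)
      show "\<Union>C \<subseteq> carrier G" using ch by (auto simp: subset_chain_def indep_def)
      fix S assume S: "finite S \<and> S \<subseteq> \<Union>C \<and> fp S = \<one>"
      show "S = {}"
      proof (cases "C = {}")
        case True then show ?thesis using S by auto
      next
        case False
        obtain B where "B \<in> C" "S \<subseteq> B" using finite_subset_Union_chain[of S C] S False ch by blast
        then show ?thesis using S ch by (auto simp: subset_chain_def indep_def)
      qed
    qed
  qed auto
qed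

lemma basis_exists:
  "\<exists>B crd. B \<subseteq> carrier G \<and>
     (\<forall>x\<in>carrier G. finite (crd x) \<and> crd x \<subseteq> B \<and> fp (crd x) = x) \<and>
     (\<forall>x\<in>carrier G. \<forall>y\<in>carrier G. crd (x \<otimes> y) = (crd x - crd y) \<union> (crd y - crd x))"
proof -
  obtain B where B: "indep B" and mx: "\<And>Z. indep Z \<Longrightarrow> B \<subseteq> Z \<Longrightarrow> Z = B"
    using exists_max_indep by auto
  have Bc: "B \<subseteq> carrier G" using B by (simp add: indep_def)
  have uniq: "S = T" if "finite S" "S \<subseteq> B" "finite T" "T \<subseteq> B" "fp S = fp T" for S T
  proof -
    have ST: "S \<subseteq> carrier G" "T \<subseteq> carrier G" using that(2,4) Bc by auto
    have "fp ((S - T) \<union> (T - S)) = fp S \<otimes> fp T" by (rule fp_symdiff) (use that ST in auto)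
    also have "\<dots> = fp S \<otimes> fp S" using that(5) by simp
    also have "\<dots> = \<one>" by (rule fp_sq[OF ST(1)])
    finally have e: "fp ((S - T) \<union> (T - S)) = \<one>" .
    have ind: "\<forall>S. finite S \<and> S \<subseteq> B \<and> fp S = \<one> \<longrightarrow> S = {}" using B unfolding indep_def by blast
    have "finite ((S - T) \<union> (T - S))" "(S - T) \<union> (T - S) \<subseteq> B" using that by auto
    then have "(S - T) \<union> (T - S) = {}"
      using ind e by blast
    then show ?thesis by blast
  qed
  have span: "\<exists>S. finite S \<and> S \<subseteq> B \<and> fp S = x" if x: "x \<in> carrier G" for x
  proof (rule ccontr)
    assume ns: "\<not> (\<exists>S. finite S \<and> S \<subseteq> B \<and> fp S = x)"
    have "indep (insert x B)"
      unfolding indep_def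
    proof (intro conjI allI impI)
      show "insert x B \<subseteq> carrier G" using x Bc by auto
      fix S assume S: "finite S \<and> S \<subseteq> insert x B \<and> fp S = \<one>"
      show "S = {}"
      proof (cases "x \<in> S")
        case True
        define S' where "S' = S - {x}"
        have S': "finite S'" "S' \<subseteq> B" "x \<notin> S'" "S = insert x S'" using S True by (auto simp: S'_def)
        have cS': "fp S' \<in> carrier G" using S' Bc by (auto intro!: fp_carrier)
        have fi: "fp (insert x S') = x \<otimes> fp S'" by (rule finprod_insert) (use S' x Bc in auto)
        have "fp (insert x S') = \<one>" using S unfolding S'(4) by blast
        then have "x \<otimes> fp S' = \<one>" using fi by simp
        have "x = x \<otimes> (fp S' \<otimes> fp S')" using fp_sq[of S'] S'(2) Bc x by auto
        also have "\<dots> = (x \<otimes> fp S') \<otimes> fp S'" using cS' x by (simp add: m_assoc)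
        also have "\<dots> = fp S'" using \<open>x \<otimes> fp S' = \<one>\<close> cS' by simp
        finally have "x = fp S'" .
        then have "\<exists>S. finite S \<and> S \<subseteq> B \<and> fp S = x" using S'(1,2) by (intro exI[of _ S']) simp
        then show ?thesis using ns by (rule notE[rotated])
      next
        case False
        then have "S \<subseteq> B" using S by auto
        then show ?thesis using B S unfolding indep_def by blast
      qed
    qed
    then have "insert x B = B" using mx by blast
    then have "x \<in> B" by blast
    have "fp {x} = x" using x by simp
    then have "\<exists>S. finite S \<and> S \<subseteq> B \<and> fp S = x" using \<open>x \<in> B\<close> by (intro exI[of _ "{x}"]) simp
    then show False using ns by (rule notE[rotated])
  qed
  define crd where "crd x = (THE S. finite S \<and> S \<subseteq> B \<and> fp S = x)" for x
  have crd: "finite (crd x) \<and> crd x \<subseteq> B \<and> fp (crd x) = x" if xc: "x \<in> carrier G" for x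
  proof -
    obtain S where S: "finite S \<and> S \<subseteq> B \<and> fp S = x" using span[OF xc] by blast
    have "crd x = S" unfolding crd_def
    proof (rule the_equality)
      show "finite S \<and> S \<subseteq> B \<and> fp S = x" by (rule S)
      fix T assume T: "finite T \<and> T \<subseteq> B \<and> fp T = x"
      show "T = S" by (rule uniq) (use S T in auto)
    qed
    then show ?thesis using S by simp
  qed
  have cm: "crd (x \<otimes> y) = (crd x - crd y) \<union> (crd y - crd x)" if "x \<in> carrier G" "y \<in> carrier G" for x y
  proof -
    have cx: "finite (crd x)" "crd x \<subseteq> B" "fp (crd x) = x" using crd[OF that(1)] by auto
    have cy: "finite (crd y)" "crd y \<subseteq> B" "fp (crd y) = y" using crd[OF that(2)] by auto
    have cxy: "finite (crd (x \<otimes> y))" "crd (x \<otimes> y) \<subseteq> B" "fp (crd (x \<otimes> y)) = x \<otimes> y"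
      using crd[of "x \<otimes> y"] that by auto
    have "fp ((crd x - crd y) \<union> (crd y - crd x)) = fp (crd x) \<otimes> fp (crd y)"
      by (rule fp_symdiff) (use cx cy Bc in auto)
    then have e: "fp (crd (x \<otimes> y)) = fp ((crd x - crd y) \<union> (crd y - crd x))"
      using cx cy cxy by simp
    have "finite ((crd x - crd y) \<union> (crd y - crd x))" "(crd x - crd y) \<union> (crd y - crd x) \<subseteq> B"
      using cx cy by auto
    then show ?thesis using uniq[OF cxy(1,2) _ _ e] by blast
  qed
  show ?thesis
    by (rule exI[of _ B], rule exI[of _ crd]) (use Bc crd cm in simp)
qed

end


definition swp :: "(('a \<times> 'a) \<Rightarrow>\<^sub>0 int) \<Rightarrow> (('a \<times> 'a) \<Rightarrow>\<^sub>0 int)" where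
  "swp f = frag_extend (\<lambda>p. frag_of (snd p, fst p)) f"

lemma swp_diff: "swp (a - b) = swp a - swp b" by (simp add: swp_def frag_extend_diff)
lemma swp_0 [simp]: "swp 0 = 0" by (simp add: swp_def)
lemma swp_of [simp]: "swp (frag_of (u,v)) = frag_of (v,u)" by (simp add: swp_def)



definition lin :: "('k \<Rightarrow> int) \<Rightarrow> ('k \<Rightarrow>\<^sub>0 int) \<Rightarrow> int" where
  "lin \<beta> h = Poly_Mapping.lookup (frag_extend (\<lambda>k. frag_cmul (\<beta> k) (frag_of ())) h) ()"

lemma lin_add: "lin \<beta> (a + b) = lin \<beta> a + lin \<beta> b"
  by (simp add: lin_def frag_extend_add lookup_add)

lemma lin_diff: "lin \<beta> (a - b) = lin \<beta> a - lin \<beta> b"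
  by (simp add: lin_def frag_extend_diff lookup_minus)

lemma lin_minus: "lin \<beta> (- a) = - lin \<beta> a"
  by (simp add: lin_def frag_extend_minus)

lemma lin_0 [simp]: "lin \<beta> 0 = 0"
  by (simp add: lin_def)

lemma lin_of [simp]: "lin \<beta> (frag_of k) = \<beta> k"
  by (simp add: lin_def)

lemma lin_swp: "lin (\<beta> :: 'a \<times> 'a \<Rightarrow> int) (swp f) = lin (\<lambda>p. \<beta> (snd p, fst p)) f"
proof (rule frag_induction[of f UNIV])
  fix x :: "'a \<times> 'a" show "lin \<beta> (swp (frag_of x)) = lin (\<lambda>p. \<beta> (snd p, fst p)) (frag_of x)"
    by (simp add: swp_def)
next
  fix a b assume "lin \<beta> (swp a) = lin (\<lambda>p. \<beta> (snd p, fst p)) a" "lin \<beta> (swp b) = lin (\<lambda>p. \<beta> (snd p, fst p)) b"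
  then show "lin \<beta> (swp (a - b)) = lin (\<lambda>p. \<beta> (snd p, fst p)) (a - b)" by (simp add: swp_diff lin_diff)
qed auto

context E2 begin

definition biadd :: "('a \<times> 'a \<Rightarrow> int) \<Rightarrow> bool" where
  "biadd \<beta> \<longleftrightarrow> (\<forall>u\<in>carrier G. \<forall>v\<in>carrier G. \<forall>w\<in>carrier G.
      even (\<beta> (u \<otimes> v, w) - \<beta> (u, w) - \<beta> (v, w)) \<and> even (\<beta> (w, u \<otimes> v) - \<beta> (w, u) - \<beta> (w, v)))"

lemma lin_NN:
  assumes "biadd \<beta>" "h \<in> NN"
  shows "even (lin \<beta> h)"
  using assms(2)
proof (induction rule: generate.induct)
  case one then show ?case by simp
next
  case (incl h) then show ?case using assms(1)
    by (auto simp: tensor_rels_def biadd_def lin_diff)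
next
  case (inv h)
  then have "h \<in> carrier FF" using tensor_rels_sub by blast
  then have "inv\<^bsub>FF\<^esub> h = - h" by simp
  moreover have "even (lin \<beta> h)" using inv assms(1) by (auto simp: tensor_rels_def biadd_def lin_diff)
  ultimately show ?case by (simp add: lin_minus)
next
  case (eng h1 h2) then show ?case by (simp add: lin_add)
qed

end

locale E2b = E2 +
  fixes B :: "'a set" and crd :: "'a \<Rightarrow> 'a set"
  assumes B_sub: "B \<subseteq> carrier G"
    and crd_props: "\<And>x. x \<in> carrier G \<Longrightarrow> finite (crd x) \<and> crd x \<subseteq> B \<and> fp (crd x) = x"
    and crd_mult: "\<And>x y. x \<in> carrier G \<Longrightarrow> y \<in> carrier G \<Longrightarrow> crd (x \<otimes> y) = (crd x - crd y) \<union> (crd y - crd x)"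
begin

definition c :: "'a \<Rightarrow> 'a \<Rightarrow> int" where "c b x = (if b \<in> crd x then 1 else 0)"

lemma c_mult: "x \<in> carrier G \<Longrightarrow> y \<in> carrier G \<Longrightarrow> even (c b (x \<otimes> y) - c b x - c b y)"
  by (simp add: c_def crd_mult)

definition bb :: "'a \<Rightarrow> 'a \<Rightarrow> 'a \<times> 'a \<Rightarrow> int" where "bb b b' p = c b (fst p) * c b' (snd p)"

lemma biadd_bb: "biadd (bb b b')"
  unfolding biadd_def
proof (intro ballI conjI)
  fix u v w assume uvw: "u \<in> carrier G" "v \<in> carrier G" "w \<in> carrier G"
  have "bb b b' (u \<otimes> v, w) - bb b b' (u, w) - bb b b' (v, w) = (c b (u \<otimes> v) - c b u - c b v) * c b' w"
    by (simp add: bb_def algebra_simps)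
  then show "even (bb b b' (u \<otimes> v, w) - bb b b' (u, w) - bb b b' (v, w))"
    using c_mult[OF uvw(1,2), of b] by simp
  have "bb b b' (w, u \<otimes> v) - bb b b' (w, u) - bb b b' (w, v) = c b w * (c b' (u \<otimes> v) - c b' u - c b' v)"
    by (simp add: bb_def algebra_simps)
  then show "even (bb b b' (w, u \<otimes> v) - bb b b' (w, u) - bb b b' (w, v))"
    using c_mult[OF uvw(1,2), of b'] by simp
qed

lemma bb_swap: "(\<lambda>p. bb b b' (snd p, fst p)) = bb b' b"
  by (rule ext) (simp add: bb_def mult.commute)

lemma crd_fin: "x \<in> carrier G \<Longrightarrow> finite (crd x)" using crd_props by blast
lemma crd_B: "x \<in> carrier G \<Longrightarrow> crd x \<subseteq> B" using crd_props by blast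
lemma crd_fp: "x \<in> carrier G \<Longrightarrow> fp (crd x) = x" using crd_props by blast
lemma crd_C: "x \<in> carrier G \<Longrightarrow> crd x \<subseteq> carrier G" using crd_B B_sub by blast

definition Phi :: "(('a \<times> 'a) \<Rightarrow>\<^sub>0 int) \<Rightarrow> (('a \<times> 'a) \<Rightarrow>\<^sub>0 int)" where
  "Phi f = frag_extend (\<lambda>k. \<Sum>b1\<in>crd (fst k). \<Sum>b2\<in>crd (snd k). frag_of (b1, b2)) f"

lemma NF1a:
  assumes "finite S" "S \<subseteq> carrier G" "y \<in> carrier G"
  shows "frag_of (fp S, y) - (\<Sum>b\<in>S. frag_of (b, y)) \<in> NN"
  using assms(1,2)
proof (induction S rule: finite_induct)
  case empty then show ?case using n_one1[OF assms(3)] by simp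
next
  case (insert b S)
  have bS: "b \<in> carrier G" "S \<subseteq> carrier G" using insert.prems by auto
  have fi: "fp (insert b S) = b \<otimes> fp S" by (rule finprod_insert) (use insert bS in auto)
  have cS: "fp S \<in> carrier G" using bS(2) by (rule fp_carrier)
  have "frag_of (fp (insert b S), y) - (\<Sum>b\<in>insert b S. frag_of (b, y))
      = (frag_of (b \<otimes> fp S, y) - frag_of (b, y) - frag_of (fp S, y)) + (frag_of (fp S, y) - (\<Sum>b\<in>S. frag_of (b, y)))"
    using insert.hyps by (simp add: fi algebra_simps)
  also have "\<dots> \<in> NN"
    by (rule fa_sub_add[OF NN_sub rel1[OF bS(1) cS assms(3)] insert.IH[OF bS(2)]])
  finally show ?case .
qed

lemma NF1b:
  assumes "finite S" "S \<subseteq> carrier G" "y \<in> carrier G"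
  shows "frag_of (y, fp S) - (\<Sum>b\<in>S. frag_of (y, b)) \<in> NN"
  using assms(1,2)
proof (induction S rule: finite_induct)
  case empty then show ?case using n_one2[OF assms(3)] by simp
next
  case (insert b S)
  have bS: "b \<in> carrier G" "S \<subseteq> carrier G" using insert.prems by auto
  have fi: "fp (insert b S) = b \<otimes> fp S" by (rule finprod_insert) (use insert bS in auto)
  have cS: "fp S \<in> carrier G" using bS(2) by (rule fp_carrier)
  have "frag_of (y, fp (insert b S)) - (\<Sum>b\<in>insert b S. frag_of (y, b))
      = (frag_of (y, b \<otimes> fp S) - frag_of (y, b) - frag_of (y, fp S)) + (frag_of (y, fp S) - (\<Sum>b\<in>S. frag_of (y, b)))"
    using insert.hyps by (simp add: fi algebra_simps)
  also have "\<dots> \<in> NN"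
    by (rule fa_sub_add[OF NN_sub rel2[OF bS(1) cS assms(3)] insert.IH[OF bS(2)]])
  finally show ?case .
qed

lemma Phi_diff: "Phi (a - b) = Phi a - Phi b" by (simp add: Phi_def frag_extend_diff)

lemma Phi_NN:
  assumes "Poly_Mapping.keys f \<subseteq> CC"
  shows "f - Phi f \<in> NN"
proof (rule free_Abelian_group_induct[OF assms])
  show "0 - Phi 0 \<in> NN" using subgroup.one_closed[OF NN_sub] by (simp add: Phi_def)
next
  fix x y assume "x - Phi x \<in> NN" "y - Phi y \<in> NN"
  from fa_sub_diff[OF NN_sub this]
  show "(x - y) - Phi (x - y) \<in> NN" by (simp add: Phi_diff algebra_simps)
next
  fix a assume "a \<in> CC"
  then obtain x y where a: "a = (x,y)" "x \<in> carrier G" "y \<in> carrier G" by auto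
  have P: "Phi (frag_of (x,y)) = (\<Sum>b1\<in>crd x. \<Sum>b2\<in>crd y. frag_of (b1, b2))"
    by (simp add: Phi_def)
  define A where "A = (\<Sum>b1\<in>crd x. frag_of (b1, y))"
  have e: "frag_of (x,y) - Phi (frag_of (x,y)) = (frag_of (x,y) - A) + (A - (\<Sum>b1\<in>crd x. \<Sum>b2\<in>crd y. frag_of (b1, b2)))"
    unfolding P by simp
  have e2: "A - (\<Sum>b1\<in>crd x. \<Sum>b2\<in>crd y. frag_of (b1, b2)) = (\<Sum>b1\<in>crd x. frag_of (b1, y) - (\<Sum>b2\<in>crd y. frag_of (b1, b2)))"
    unfolding A_def by (rule sum_subtractf[symmetric])
  have h2: "(\<Sum>b1\<in>crd x. frag_of (b1, y) - (\<Sum>b2\<in>crd y. frag_of (b1, b2))) \<in> NN"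
  proof (rule fa_sub_sum[OF NN_sub])
    fix b1 assume "b1 \<in> crd x"
    then have "b1 \<in> carrier G" using crd_C[OF a(2)] by blast
    from NF1b[OF crd_fin[OF a(3)] crd_C[OF a(3)] this]
    show "frag_of (b1, y) - (\<Sum>b2\<in>crd y. frag_of (b1, b2)) \<in> NN" unfolding crd_fp[OF a(3)] .
  qed
  have h1: "frag_of (x,y) - A \<in> NN"
    using NF1a[OF crd_fin[OF a(2)] crd_C[OF a(2)] a(3)] unfolding crd_fp[OF a(2)] A_def .
  have "(frag_of (x,y) - A) + (A - (\<Sum>b1\<in>crd x. \<Sum>b2\<in>crd y. frag_of (b1, b2))) \<in> NN"
    unfolding e2 by (rule fa_sub_add[OF NN_sub h1 h2])
  then show "frag_of a - Phi (frag_of a) \<in> NN" unfolding a(1) e .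
qed

lemma lookup_dsum:
  assumes "finite XX" "finite YY"
  shows "Poly_Mapping.lookup (\<Sum>b1\<in>XX. \<Sum>b2\<in>YY. frag_of (b1, b2)) (b, b') = (if b \<in> XX \<and> b' \<in> YY then 1 else 0)"
proof -
  have i: "(\<Sum>xa\<in>YY. if b = x \<and> b' = xa then 1 else 0) = (if b = x then (if b' \<in> YY then 1 else 0) else (0::int))" for x
    by (cases "b = x") (simp_all add: sum.delta' assms)
  have "Poly_Mapping.lookup (\<Sum>b1\<in>XX. \<Sum>b2\<in>YY. frag_of (b1, b2)) (b, b') =
      (\<Sum>x\<in>XX. \<Sum>xa\<in>YY. if b = x \<and> b' = xa then 1 else 0)"
    by (simp add: lookup_sum lookup_single)
  also have "\<dots> = (\<Sum>x\<in>XX. if b = x then (if b' \<in> YY then 1 else 0) else 0)"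
    by (simp only: i)
  also have "\<dots> = (if b \<in> XX \<and> b' \<in> YY then 1 else 0)"
    by (simp add: sum.delta' assms)
  finally show ?thesis .
qed

lemma lookup_Phi:
  assumes "Poly_Mapping.keys f \<subseteq> CC"
  shows "Poly_Mapping.lookup (Phi f) (b, b') = lin (bb b b') f"
proof (rule free_Abelian_group_induct[OF assms])
  show "Poly_Mapping.lookup (Phi 0) (b, b') = lin (bb b b') 0" by (simp add: Phi_def)
next
  fix x y assume "Poly_Mapping.lookup (Phi x) (b, b') = lin (bb b b') x"
    "Poly_Mapping.lookup (Phi y) (b, b') = lin (bb b b') y"
  then show "Poly_Mapping.lookup (Phi (x - y)) (b, b') = lin (bb b b') (x - y)"
    by (simp add: Phi_diff lin_diff lookup_minus)
next
  fix a assume "a \<in> CC"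
  then obtain x y where a: "a = (x,y)" "x \<in> carrier G" "y \<in> carrier G" by auto
  show "Poly_Mapping.lookup (Phi (frag_of a)) (b, b') = lin (bb b b') (frag_of a)"
    using a by (simp add: Phi_def lookup_dsum crd_fin bb_def c_def)
qed

lemma keys_dsum: "Poly_Mapping.keys (\<Sum>b1\<in>XX. \<Sum>b2\<in>YY. frag_of (b1, b2)) \<subseteq> XX \<times> YY"
proof
  fix p assume "p \<in> Poly_Mapping.keys (\<Sum>b1\<in>XX. \<Sum>b2\<in>YY. frag_of (b1, b2))"
  then have "p \<in> (\<Union>b1\<in>XX. Poly_Mapping.keys (\<Sum>b2\<in>YY. frag_of (b1, b2)))"
    by (rule subsetD[OF keys_sum])
  then obtain b1 where b1: "b1 \<in> XX" "p \<in> Poly_Mapping.keys (\<Sum>b2\<in>YY. frag_of (b1, b2))" by (rule UN_E)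
  from b1(2) have "p \<in> (\<Union>b2\<in>YY. Poly_Mapping.keys (frag_of (b1, b2)))"
    by (rule subsetD[OF keys_sum])
  then obtain b2 where b2: "b2 \<in> YY" "p \<in> Poly_Mapping.keys (frag_of (b1, b2))" by (rule UN_E)
  from b2(2) have "p = (b1, b2)" by simp
  then show "p \<in> XX \<times> YY" using b1(1) b2(1) by simp
qed

lemma keys_Phi:
  assumes "Poly_Mapping.keys f \<subseteq> CC"
  shows "Poly_Mapping.keys (Phi f) \<subseteq> B \<times> B"
proof
  fix p assume "p \<in> Poly_Mapping.keys (Phi f)"
  then have "p \<in> (\<Union>q\<in>Poly_Mapping.keys f. Poly_Mapping.keys (\<Sum>b1\<in>crd (fst q). \<Sum>b2\<in>crd (snd q). frag_of (b1, b2)))"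
    unfolding Phi_def by (rule subsetD[OF keys_frag_extend])
  then obtain q where q: "q \<in> Poly_Mapping.keys f"
      "p \<in> Poly_Mapping.keys (\<Sum>b1\<in>crd (fst q). \<Sum>b2\<in>crd (snd q). frag_of (b1, b2))"
    by (rule UN_E)
  have qc: "fst q \<in> carrier G" "snd q \<in> carrier G" using q(1) assms by auto
  have "p \<in> crd (fst q) \<times> crd (snd q)" using q(2) keys_dsum by blast
  then show "p \<in> B \<times> B" using crd_B[OF qc(1)] crd_B[OF qc(2)] by blast
qed

lemma reduce:
  assumes "Poly_Mapping.keys h \<subseteq> B \<times> B"
    "\<forall>a\<in>B. \<forall>a'\<in>B. even (Poly_Mapping.lookup h (a,a') - Poly_Mapping.lookup h (a',a))"
  shows "h \<in> MM"
  using assms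
proof (induction "card (Poly_Mapping.keys h)" arbitrary: h rule: less_induct)
  case less
  show ?case
  proof (cases "h = 0")
    case True then show ?thesis using subgroup.one_closed[OF MM_sub] by simp
  next
    case False
    then obtain p where p: "p \<in> Poly_Mapping.keys h" using keys_eq_empty by blast
    then obtain a a' where aa: "p = (a,a')" "a \<in> B" "a' \<in> B" using less.prems(1) by blast
    have ac: "a \<in> carrier G" "a' \<in> carrier G" using aa B_sub by auto
    define x where "x = Poly_Mapping.lookup h (a,a')"
    define y where "y = Poly_Mapping.lookup h (a',a)"
    define d where "d = frag_cmul x (frag_of (a,a')) + (if a = a' then 0 else frag_cmul y (frag_of (a',a)))"
    define h' where "h' = h - d"
    have lk: "Poly_Mapping.lookup h' q = (if q = (a,a') \<or> q = (a',a) then 0 else Poly_Mapping.lookup h q)" for q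
      by (auto simp: h'_def d_def x_def y_def lookup_minus lookup_add lookup_single)
    have kq: "q \<in> Poly_Mapping.keys h' \<longleftrightarrow> q \<in> Poly_Mapping.keys h - {(a,a'),(a',a)}" for q
      by (simp add: lk in_keys_iff)
    have kh': "Poly_Mapping.keys h' = Poly_Mapping.keys h - {(a,a'),(a',a)}"
      using kq by blast
    have card: "card (Poly_Mapping.keys h') < card (Poly_Mapping.keys h)"
      unfolding kh' by (rule psubset_card_mono) (use p aa in auto)
    have h'M: "h' \<in> MM"
    proof (rule less.hyps[OF card])
      show "Poly_Mapping.keys h' \<subseteq> B \<times> B" using kh' less.prems(1) by blast
      show "\<forall>b\<in>B. \<forall>b'\<in>B. even (Poly_Mapping.lookup h' (b, b') - Poly_Mapping.lookup h' (b', b))"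
        using less.prems(2) by (auto simp: lk)
    qed
    have dM: "d \<in> MM"
    proof (cases "a = a'")
      case True
      then show ?thesis using fa_sub_cmul[OF MM_sub rel_diag[OF ac(1)]] by (simp add: d_def)
    next
      case False
      have "even (x - y)" using less.prems(2) aa by (simp add: x_def y_def)
      then obtain k where k: "x - y = 2 * k" by (rule evenE)
      have "d = frag_cmul y (frag_of (a,a') + frag_of (a',a)) + frag_cmul k (frag_of (a,a') + frag_of (a,a'))"
        using False k by (intro poly_mapping_eqI) (auto simp: d_def lookup_add algebra_simps)
      moreover have "frag_cmul y (frag_of (a,a') + frag_of (a',a)) \<in> MM"
        by (rule fa_sub_cmul[OF MM_sub m_anti[OF ac]])
      moreover have "frag_cmul k (frag_of (a,a') + frag_of (a,a')) \<in> MM"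
        by (rule fa_sub_cmul[OF MM_sub]) (use n_two[OF ac] NN_MM in blast)
      ultimately show ?thesis using fa_sub_add[OF MM_sub] by simp
    qed
    have "h = h' + d" by (simp add: h'_def)
    then show ?thesis using fa_sub_add[OF MM_sub h'M dM] by simp
  qed
qed

lemma core_b:
  assumes f: "Poly_Mapping.keys f \<subseteq> CC" and g: "g \<in> carrier G"
    and r: "f - swp f + frag_of (g,g) \<in> NN"
  shows "g = \<one> \<and> f \<in> MM"
proof
  have "b \<notin> crd g" if b: "b \<in> B" for b
  proof -
    have "even (lin (bb b b) (f - swp f + frag_of (g,g)))" by (rule lin_NN[OF biadd_bb r])
    moreover have "lin (bb b b) (f - swp f + frag_of (g,g)) = c b g * c b g"
      by (simp add: lin_add lin_diff lin_swp bb_swap) (simp add: bb_def)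
    ultimately show ?thesis by (auto simp: c_def split: if_splits)
  qed
  then have "crd g = {}" using crd_B[OF g] by blast
  then show "g = \<one>" using crd_fp[OF g] by simp
  then have fs: "f - swp f \<in> NN"
    using fa_sub_diff[OF NN_sub r n_one1[of \<one>]] by simp
  have "Phi f \<in> MM"
  proof (rule reduce[OF keys_Phi[OF f]], intro ballI)
    fix a a' assume "a \<in> B" "a' \<in> B"
    have "Poly_Mapping.lookup (Phi f) (a, a') - Poly_Mapping.lookup (Phi f) (a', a) = lin (bb a a') (f - swp f)"
      by (simp add: lookup_Phi[OF f] lin_diff lin_swp bb_swap)
    then show "even (Poly_Mapping.lookup (Phi f) (a, a') - Poly_Mapping.lookup (Phi f) (a', a))"
      using lin_NN[OF biadd_bb fs] by simp
  qed
  moreover have "f - Phi f \<in> MM" using Phi_NN[OF f] NN_MM by blast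
  ultimately show "f \<in> MM" using fa_sub_add[OF MM_sub] by fastforce
qed

end


context E2 begin

lemma keys_swp: "Poly_Mapping.keys f \<subseteq> CC \<Longrightarrow> Poly_Mapping.keys (swp f) \<subseteq> CC"
  unfolding swp_def using keys_frag_extend[of "\<lambda>p. frag_of (snd p, fst p)" f] by force

lemma core:
  assumes "Poly_Mapping.keys f \<subseteq> CC" "g \<in> carrier G" "f - swp f + frag_of (g,g) \<in> NN"
  shows "g = \<one> \<and> f \<in> MM"
proof -
  obtain B crd where B: "B \<subseteq> carrier G"
     "\<forall>x\<in>carrier G. finite (crd x) \<and> crd x \<subseteq> B \<and> fp (crd x) = x"
     "\<forall>x\<in>carrier G. \<forall>y\<in>carrier G. crd (x \<otimes> y) = (crd x - crd y) \<union> (crd y - crd x)"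
    using basis_exists by blast
  interpret b: E2b G B crd
    by unfold_locales (use B in blast)+
  show ?thesis by (rule b.core_b[OF assms])
qed

end
context E2pi begin

lemma pi_coset:
  assumes "Poly_Mapping.keys f \<subseteq> CC"
  shows "\<pi> (MM #>\<^bsub>FF\<^esub> f) = NN #>\<^bsub>FF\<^esub> (f - swp f)"
proof (rule free_Abelian_group_induct[OF assms])
  have "\<pi> (MM #>\<^bsub>FF\<^esub> 0) = \<pi> \<one>\<^bsub>ext_sq G\<^esub>" by (simp add: fa_coset_zero[OF MM_sub] ext_sq_eq)
  also have "\<dots> = NN" using group_hom.hom_one[OF gh_pi] by (simp add: tensor_sq_eq)
  finally show "\<pi> (MM #>\<^bsub>FF\<^esub> 0) = NN #>\<^bsub>FF\<^esub> (0 - swp 0)" by (simp add: fa_coset_zero[OF NN_sub])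
next
  fix x y assume "Poly_Mapping.keys x \<subseteq> CC" "Poly_Mapping.keys y \<subseteq> CC"
    "\<pi> (MM #>\<^bsub>FF\<^esub> x) = NN #>\<^bsub>FF\<^esub> (x - swp x)" "\<pi> (MM #>\<^bsub>FF\<^esub> y) = NN #>\<^bsub>FF\<^esub> (y - swp y)"
  note 2 = this
  have kx: "Poly_Mapping.keys (x - swp x) \<subseteq> CC" using keys_diff[of x "swp x"] keys_swp[OF 2(1)] 2(1) by blast
  have ky: "Poly_Mapping.keys (y - swp y) \<subseteq> CC" using keys_diff[of y "swp y"] keys_swp[OF 2(2)] 2(2) by blast
  have ky': "Poly_Mapping.keys (- y) \<subseteq> CC" using 2(2) by simp
  have ky'': "Poly_Mapping.keys (- (y - swp y)) \<subseteq> CC" unfolding keys_minus by (rule ky)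
  have e1: "MM #>\<^bsub>FF\<^esub> (x - y) = (MM #>\<^bsub>FF\<^esub> x) \<otimes>\<^bsub>ext_sq G\<^esub> inv\<^bsub>ext_sq G\<^esub> (MM #>\<^bsub>FF\<^esub> y)"
    unfolding ext_sq_eq using fa_coset_inv[OF MM_sub 2(2)] fa_coset_mult[OF MM_sub 2(1) ky'] by simp
  have cx: "MM #>\<^bsub>FF\<^esub> x \<in> carrier (ext_sq G)" unfolding ext_sq_eq by (rule fa_coset_carrier[OF 2(1)])
  have cy: "MM #>\<^bsub>FF\<^esub> y \<in> carrier (ext_sq G)" unfolding ext_sq_eq by (rule fa_coset_carrier[OF 2(2)])
  have "\<pi> (MM #>\<^bsub>FF\<^esub> (x - y)) = \<pi> (MM #>\<^bsub>FF\<^esub> x) \<otimes>\<^bsub>sym_tensor_sq G\<^esub> inv\<^bsub>sym_tensor_sq G\<^esub> \<pi> (MM #>\<^bsub>FF\<^esub> y)"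
    unfolding e1 using cx cy comm_group.axioms(2)[OF comm_E] group_hom.hom_mult[OF gh_pi] group_hom.hom_inv[OF gh_pi]
    by (simp add: group.inv_closed)
  also have "\<dots> = (NN #>\<^bsub>FF\<^esub> (x - swp x)) \<otimes>\<^bsub>tensor_sq G\<^esub> inv\<^bsub>tensor_sq G\<^esub> (NN #>\<^bsub>FF\<^esub> (y - swp y))"
    using 2(3,4) S_inv pi_carrier[OF cy] by simp
  also have "\<dots> = NN #>\<^bsub>FF\<^esub> ((x - swp x) + - (y - swp y))"
    unfolding tensor_sq_eq using fa_coset_inv[OF NN_sub ky] fa_coset_mult[OF NN_sub kx ky''] by simp
  also have "(x - swp x) + - (y - swp y) = (x - y) - swp (x - y)" by (simp add: swp_diff)
  finally show "\<pi> (MM #>\<^bsub>FF\<^esub> (x - y)) = NN #>\<^bsub>FF\<^esub> ((x - y) - swp (x - y))" .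
next
  fix a assume "a \<in> CC"
  then obtain u v where a: "a = (u,v)" "u \<in> carrier G" "v \<in> carrier G" by auto
  have "tens G u v \<otimes>\<^bsub>tensor_sq G\<^esub> tens G v u = NN #>\<^bsub>FF\<^esub> (frag_of (u,v) + frag_of (v,u))"
    unfolding tens_eq tensor_sq_eq using fa_coset_mult[OF NN_sub, of "frag_of (u,v)" "frag_of (v,u)"] a by simp
  moreover have "frag_of (u,v) + frag_of (v,u) - (frag_of (u,v) - frag_of (v,u)) \<in> NN"
    using n_two[OF a(3,2)] by (simp add: algebra_simps)
  ultimately have "tens G u v \<otimes>\<^bsub>tensor_sq G\<^esub> tens G v u = NN #>\<^bsub>FF\<^esub> (frag_of (u,v) - frag_of (v,u))"
    using fa_coset_eq[OF NN_sub, of "frag_of (u,v) + frag_of (v,u)" "frag_of (u,v) - frag_of (v,u)"] a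
      keys_add[of "frag_of (u,v)" "frag_of (v,u)"] keys_diff[of "frag_of (u,v)" "frag_of (v,u)"]
    by auto
  then show "\<pi> (MM #>\<^bsub>FF\<^esub> frag_of a) = NN #>\<^bsub>FF\<^esub> (frag_of a - swp (frag_of a))"
    using pi_wedge'[OF a(2,3)] by (simp add: a wedge_eq)
qed

lemma phi_ker:
  assumes "x \<in> carrier (wedge_prod G)" "phi x = \<one>\<^bsub>sym_tensor_sq G\<^esub>"
  shows "x = \<one>\<^bsub>wedge_prod G\<^esub>"
proof -
  obtain t g where e: "x = (t,g)" "t \<in> carrier (ext_sq G)" "g \<in> carrier G"
    using assms(1) by (auto simp: wp_carrier)
  obtain f where f: "Poly_Mapping.keys f \<subseteq> CC" "t = MM #>\<^bsub>FF\<^esub> f"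
    using e(2) by (auto simp: ext_sq_eq carrier_FactGroup)
  have kd: "Poly_Mapping.keys (f - swp f) \<subseteq> CC" using keys_diff[of f "swp f"] keys_swp[OF f(1)] f(1) by blast
  have kg: "Poly_Mapping.keys (frag_of (g,g)) \<subseteq> CC" using e(3) by simp
  have kt: "Poly_Mapping.keys (f - swp f + frag_of (g,g)) \<subseteq> CC" using keys_add[of "f - swp f" "frag_of (g,g)"] kd kg by blast
  have "phi x = NN #>\<^bsub>FF\<^esub> (f - swp f + frag_of (g,g))"
    unfolding phi_def e(1) f(2) using pi_coset[OF f(1)] fa_coset_mult[OF NN_sub kd kg]
    by (simp add: tens_eq tensor_sq_eq)
  then have "f - swp f + frag_of (g,g) \<in> NN"
    using assms(2) fa_coset_one_iff[OF NN_sub kt] by (simp add: tensor_sq_eq)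
  from core[OF f(1) e(3) this] have "g = \<one>" "f \<in> MM" by auto
  moreover have "t = \<one>\<^bsub>ext_sq G\<^esub>" using fa_coset_one_iff[OF MM_sub f(1)] \<open>f \<in> MM\<close> f(2)
    by (simp add: ext_sq_eq)
  ultimately show ?thesis by (simp add: e wp_one)
qed

lemma phi_surj: "carrier (sym_tensor_sq G) \<subseteq> phi ` carrier (wedge_prod G)"
proof -
  have hT: "phi \<in> hom (wedge_prod G) (tensor_sq G)"
    using phi_hom S_sub_T by (auto simp: hom_def)
  have gh: "group_hom (wedge_prod G) (tensor_sq G) phi"
    unfolding group_hom_def group_hom_axioms_def using wp_group comm_group.axioms(2)[OF comm_T] hT by blast
  have sub: "subgroup (phi ` carrier (wedge_prod G)) (tensor_sq G)" by (rule group_hom.img_is_subgroup[OF gh])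
  have "carrier (tensor_sq G) \<inter> (\<lambda>v. tens G v v) ` carrier G \<subseteq> phi ` carrier (wedge_prod G)"
  proof
    fix y assume "y \<in> carrier (tensor_sq G) \<inter> (\<lambda>v. tens G v v) ` carrier G"
    then obtain v where v: "v \<in> carrier G" "y = tens G v v" by auto
    have "phi (\<one>\<^bsub>ext_sq G\<^esub>, v) = y"
      using v group_hom.hom_one[OF gh_pi] tens_carrier comm_group.axioms(2)[OF comm_T]
      by (simp add: phi_def group.is_monoid monoid.l_one)
    moreover have "(\<one>\<^bsub>ext_sq G\<^esub>, v) \<in> carrier (wedge_prod G)"
      using v comm_group.axioms(2)[OF comm_E] by (simp add: wp_carrier group.is_monoid monoid.one_closed)
    ultimately show "y \<in> phi ` carrier (wedge_prod G)" by force
  qed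
  then show ?thesis
    unfolding sym_tensor_sq_def carrier_subgroup_generated
    by (rule group.generate_subgroup_incl[OF comm_group.axioms(2)[OF comm_T] _ sub])
qed

theorem main:
  "group (wedge_prod G) \<and> phi \<in> iso (wedge_prod G) (sym_tensor_sq G)
   \<and> (\<forall>g \<in> carrier G. phi (\<one>\<^bsub>ext_sq G\<^esub>, g) = tens G g g)"
proof (intro conjI ballI)
  show "group (wedge_prod G)" by (rule wp_group)
  have gh: "group_hom (wedge_prod G) (sym_tensor_sq G) phi"
    unfolding group_hom_def group_hom_axioms_def using wp_group group_S phi_hom by blast
  show "phi \<in> iso (wedge_prod G) (sym_tensor_sq G)"
    unfolding group_hom.iso_iff[OF gh] using phi_surj phi_ker by blast
  fix g assume g: "g \<in> carrier G"
  show "phi (\<one>\<^bsub>ext_sq G\<^esub>, g) = tens G g g"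
    using g group_hom.hom_one[OF gh_pi] tens_carrier comm_group.axioms(2)[OF comm_T]
    by (simp add: phi_def group.is_monoid monoid.l_one)
qed

end

theorem theorem4p1:
  fixes G :: "('a, 'b) monoid_scheme"
    and \<pi> :: "(('a \<times> 'a) \<Rightarrow>\<^sub>0 int) set \<Rightarrow> (('a \<times> 'a) \<Rightarrow>\<^sub>0 int) set"
  assumes "comm_group G"
    and "\<forall>x \<in> carrier G. x \<otimes>\<^bsub>G\<^esub> x = \<one>\<^bsub>G\<^esub>"
    and "\<pi> \<in> hom (ext_sq G) (sym_tensor_sq G)"
    and "\<forall>u \<in> carrier G. \<forall>v \<in> carrier G.
           \<pi> (wedge G u v) = tens G u v \<otimes>\<^bsub>tensor_sq G\<^esub> inv\<^bsub>tensor_sq G\<^esub> (tens G v u)"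
  shows "group (wedge_prod G)
    \<and> (\<lambda>(t, g). \<pi> t \<otimes>\<^bsub>sym_tensor_sq G\<^esub> tens G g g) \<in> iso (wedge_prod G) (sym_tensor_sq G)
    \<and> (\<forall>g \<in> carrier G. (\<lambda>(t, g). \<pi> t \<otimes>\<^bsub>sym_tensor_sq G\<^esub> tens G g g) (\<one>\<^bsub>ext_sq G\<^esub>, g) = tens G g g)"
  proof -
  have e2: "E2 G"
    by (rule E2.intro[OF assms(1) E2_axioms.intro]) (use assms(2) in blast)
  interpret E2pi G \<pi>
    by (rule E2pi.intro[OF e2 E2pi_axioms.intro]) (use assms(3,4) in blast)+
  show ?thesis using main unfolding phi_def .
qed

end
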